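(* Let $N\ge3$, $\Omega\subset\mathbb{R}^N$ a bounded domain, $1<p<\infty$, and suppose $Q$, $v$ satisfy hypothesis (H) and the Sobolev hypothesis (S) with constants $M_p>0$, $\sigma>1$. Then for every $f\in\mathring H^{1,p}_Q(\Omega)$ with $f\ne0$, every $r\in[1,\sigma p)$ and every $\varepsilon>0$, $$\int_\Omega\frac{|f|^r}{\|f\|_{L^r_v}^r}\log\Big(\frac{|f|}{\|f\|_{L^r_v}}\Big)\,v\,dx\le\frac{\sigma}{\sigma p-r}\Big(\varepsilon M_p^p\frac{\|\nabla f\|_{\mathcal L^p_Q}^p}{\|f\|_{L^r_v}^p}-\log\varepsilon\Big).$$
   Context: $p'=p/(p-1)$. $Q:\Omega\to\mathbb{R}^{N\times N}$ is measurable, symmetric and positive definite a.e., with $|Q|_{\rm op}\in L^1_{loc}(\Omega)$ ($|\cdot|_{\rm op}$ operator norm; $\sqrt Q$ defined pointwise); $v\ge0$ measurable. Hypothesis (H): $v\in L^1(\Omega)$; $|\sqrt Q(x)|_{\rm op}^p\le v(x)$ a.e.; $|(\sqrt Q)^{-1}|_{\rm op}\in L^{p'}_{loc}(\Omega)$. $L^q_v$ is $L^q$ w.r.t. $v\,dx$. $\mathcal L^p_Q(\Omega)$: vector fields with $\|\vec f\|_{\mathcal L^p_Q}=(\int_\Omega|\sqrt Q\vec f|^pdx)^{1/p}<\infty$. $H^{1,p}_Q(\Omega)$: completion of Lipschitz functions on $\overline\Omega$ under $\|u\|_{L^p_v}+\|\nabla u\|_{\mathcal L^p_Q}$ (elements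 are functions in $L^p_v\cap W^{1,1}_{loc}$ with weak gradient in $\mathcal L^p_Q$); $\mathring H^{1,p}_Q(\Omega)$: closure of $C^{0,1}_c(\Omega)$ in it. Hypothesis (S): $\|u\|_{L^{\sigma p}_v}\le M_p\|\sqrt Q\nabla u\|_{L^p(\Omega)}$ for all $u\in\mathring H^{1,p}_Q(\Omega)$. *)

theory Defs
  imports "HOL-Analysis.Analysis"
begin

definition msqrt :: "real^'n^'n \<Rightarrow> real^'n^'n" where
  "msqrt A = (THE B. transpose B = B \<and> (\<forall>x. 0 \<le> x \<bullet> (B *v x)) \<and> B ** B = A)"

definition opnorm :: "real^'n^'n \<Rightarrow> real" where
  "opnorm A = onorm (\<lambda>x. A *v x)"

definition wnorm :: "(real^'n \<Rightarrow> real) \<Rightarrow> (real^'n) set \<Rightarrow> real \<Rightarrow> (real^'n \<Rightarrow> real) \<Rightarrow> real" where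
  "wnorm v \<Omega> q u = enn2real (\<integral>\<^sup>+x\<in>\<Omega>. ennreal (\<bar>u x\<bar> powr q * v x) \<partial>lebesgue) powr (1 / q)"

definition Qnorm :: "(real^'n \<Rightarrow> real^'n^'n) \<Rightarrow> (real^'n) set \<Rightarrow> real \<Rightarrow> (real^'n \<Rightarrow> real^'n) \<Rightarrow> real" where
  "Qnorm Q \<Omega> p g = enn2real (\<integral>\<^sup>+x\<in>\<Omega>. ennreal (norm (msqrt (Q x) *v g x) powr p) \<partial>lebesgue) powr (1 / p)"

definition lip_c :: "(real^'n) set \<Rightarrow> (real^'n \<Rightarrow> real) \<Rightarrow> bool" where
  "lip_c \<Omega> \<phi> \<longleftrightarrow> (\<exists>C. C-lipschitz_on UNIV \<phi>) \<and>
     (\<exists>K. compact K \<and> K \<subseteq> \<Omega> \<and> (\<forall>x. x \<notin> K \<longrightarrow> \<phi> x = 0))"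

text \<open>H0 Q v Omega p f g: f belongs to the closure of compactly supported Lipschitz
  functions in H^{1,p}_Q(Omega), with gradient g (the element of L^p_Q that is the limit
  of the gradients of the approximating sequence).\<close>
definition H0 :: "(real^'n \<Rightarrow> real^'n^'n) \<Rightarrow> (real^'n \<Rightarrow> real) \<Rightarrow> (real^'n) set \<Rightarrow> real
    \<Rightarrow> (real^'n \<Rightarrow> real) \<Rightarrow> (real^'n \<Rightarrow> real^'n) \<Rightarrow> bool" where
  "H0 Q v \<Omega> p f g \<longleftrightarrow>
     f \<in> borel_measurable lebesgue \<and> g \<in> borel_measurable lebesgue \<and>
     (\<integral>\<^sup>+x\<in>\<Omega>. ennreal (\<bar>f x\<bar> powr p * v x) \<partial>lebesgue) < \<infinity> \<and>
     (\<integral>\<^sup>+x\<in>\<Omega>. ennreal (norm (msqrt (Q x) *v g x) powr p) \<partial>lebesgue) < \<infinity> \<and>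
     (\<exists>\<phi> G. (\<forall>k. lip_c \<Omega> (\<phi> k) \<and> G k \<in> borel_measurable lebesgue \<and>
                 (AE x in lebesgue. x \<in> \<Omega> \<longrightarrow> (\<phi> k has_derivative (\<lambda>h. G k x \<bullet> h)) (at x))) \<and>
        (\<lambda>k. \<integral>\<^sup>+x\<in>\<Omega>. ennreal (\<bar>\<phi> k x - f x\<bar> powr p * v x) \<partial>lebesgue) \<longlonglongrightarrow> 0 \<and>
        (\<lambda>k. \<integral>\<^sup>+x\<in>\<Omega>. ennreal (norm (msqrt (Q x) *v (G k x - g x)) powr p) \<partial>lebesgue) \<longlonglongrightarrow> 0)"

definition hypH :: "(real^'n \<Rightarrow> real^'n^'n) \<Rightarrow> (real^'n \<Rightarrow> real) \<Rightarrow> (real^'n) set \<Rightarrow> real \<Rightarrow> bool" where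
  "hypH Q v \<Omega> p \<longleftrightarrow>
     Q \<in> borel_measurable lebesgue \<and>
     (AE x in lebesgue. x \<in> \<Omega> \<longrightarrow> transpose (Q x) = Q x \<and> (\<forall>y. y \<noteq> 0 \<longrightarrow> 0 < y \<bullet> (Q x *v y))) \<and>
     (\<forall>K. compact K \<and> K \<subseteq> \<Omega> \<longrightarrow> set_integrable lebesgue K (\<lambda>x. opnorm (Q x))) \<and>
     v \<in> borel_measurable lebesgue \<and> (\<forall>x. 0 \<le> v x) \<and>
     set_integrable lebesgue \<Omega> v \<and>
     (AE x in lebesgue. x \<in> \<Omega> \<longrightarrow> opnorm (msqrt (Q x)) powr p \<le> v x) \<and>
     (\<forall>K. compact K \<and> K \<subseteq> \<Omega> \<longrightarrow>
        set_integrable lebesgue K (\<lambda>x. opnorm (matrix_inv (msqrt (Q x))) powr (p / (p - 1))))"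

definition hypS :: "(real^'n \<Rightarrow> real^'n^'n) \<Rightarrow> (real^'n \<Rightarrow> real) \<Rightarrow> (real^'n) set \<Rightarrow> real \<Rightarrow> real \<Rightarrow> real \<Rightarrow> bool" where
  "hypS Q v \<Omega> p \<sigma> M \<longleftrightarrow>
     (\<forall>u gu. H0 Q v \<Omega> p u gu \<longrightarrow>
        (\<integral>\<^sup>+x\<in>\<Omega>. ennreal (\<bar>u x\<bar> powr (\<sigma> * p) * v x) \<partial>lebesgue) < \<infinity> \<and>
        wnorm v \<Omega> (\<sigma> * p) u \<le> M * Qnorm Q \<Omega> p gu)"

end

theory Submission
  imports Defs
begin


lemma sym_inner:
  fixes A :: "real^'n^'n"
  assumes "transpose A = A"
  shows "x \<bullet> (A *v y) = (A *v x) \<bullet> y"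
  by (metis assms dot_lmul_matrix transpose_matrix_vector)

lemma quad0:
  fixes a b :: real
  assumes "\<And>t. 2*t*a + t^2*b \<le> 0"
  shows "a = 0"
proof (rule ccontr)
  assume "a \<noteq> 0"
  define t where "t = a / (\<bar>b\<bar> + 1)"
  have h: "2*t*a + t^2*b \<le> 0" by (rule assms)
  have "t^2*b = t*(a/(\<bar>b\<bar>+1))*b" by (simp add: t_def power2_eq_square)
  hence e: "2*t*a + t^2*b = (t*a)*(2 + b/(\<bar>b\<bar>+1))"
    by (simp add: algebra_simps)
  have "t*a > 0" unfolding t_def using \<open>a \<noteq> 0\<close>
    by (simp add: field_simps) (metis abs_ge_zero add_pos_nonneg less_numeral_extra(1) mult.commute not_real_square_gt_zero)
  moreover have "\<bar>b/(\<bar>b\<bar>+1)\<bar> < 1" by (simp add: field_simps)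
  hence "2 + b/(\<bar>b\<bar>+1) > 0" by linarith
  ultimately have "2*t*a + t^2*b > 0" unfolding e by simp
  thus False using h by simp
qed

lemma eigen_exists:
  fixes A :: "real^'n^'n"
  assumes sym: "transpose A = A" and S: "subspace S" and ne: "S \<noteq> {0}"
    and inv: "\<And>x. x \<in> S \<Longrightarrow> A *v x \<in> S"
  shows "\<exists>u\<in>S. norm u = 1 \<and> A *v u = (u \<bullet> (A *v u)) *\<^sub>R u"
proof -
  define q where "q = (\<lambda>x::real^'n. x \<bullet> (A *v x))"
  define K where "K = S \<inter> sphere 0 1"
  have "closed S" using S by (simp add: closed_subspace)
  hence cK: "compact K" unfolding K_def by (simp add: compact_Int_closed closed_Int_compact)
  obtain x0 where x0: "x0 \<in> S" "x0 \<noteq> 0" using ne S subspace_0 by blast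
  have "x0 /\<^sub>R norm x0 \<in> K" unfolding K_def using x0 S
    by (simp add: subspace_scale)
  hence neK: "K \<noteq> {}" by blast
  have cq: "continuous_on K q" unfolding q_def
    by (intro continuous_intros linear_continuous_on matrix_vector_mul_linear)
  obtain u where u: "u \<in> K" and umax: "\<And>y. y \<in> K \<Longrightarrow> q y \<le> q u"
    using continuous_attains_sup[OF cK neK cq] by blast
  define l where "l = q u"
  have uS: "u \<in> S" and un: "norm u = 1" using u unfolding K_def by auto
  have bound: "q z \<le> l * (norm z)^2" if "z \<in> S" for z
  proof (cases "z = 0")
    case True thus ?thesis by (simp add: q_def)
  next
    case False
    hence "z /\<^sub>R norm z \<in> K" unfolding K_def using that S by (simp add: subspace_scale)
    hence "q (z /\<^sub>R norm z) \<le> l" using umax l_def by blast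
    moreover have "q (z /\<^sub>R norm z) = q z / (norm z)^2"
      unfolding q_def using False by (simp add: matrix_vector_mult_scaleR power2_eq_square field_simps)
    ultimately show ?thesis using False by (simp add: divide_le_eq)
  qed
  have perp: "y \<bullet> (A *v u) = 0" if "y \<in> S" "y \<bullet> u = 0" for y
  proof (rule quad0[where b = "q y - l * (norm y)^2"])
    fix t :: real
    have "u + t *\<^sub>R y \<in> S" using uS that S by (simp add: subspace_add subspace_scale)
    hence "q (u + t *\<^sub>R y) \<le> l * (norm (u + t *\<^sub>R y))^2" by (rule bound)
    moreover have "(norm (u + t *\<^sub>R y))^2 = 1 + t^2 * (norm y)^2"
    proof -
      have h1: "u \<bullet> u = 1" using un by (simp add: dot_square_norm)
      have h2: "y \<bullet> y = (norm y)^2" by (simp add: dot_square_norm)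
      have "(norm (u + t *\<^sub>R y))^2 = (u + t *\<^sub>R y) \<bullet> (u + t *\<^sub>R y)"
        by (simp add: power2_norm_eq_inner)
      also have "\<dots> = u \<bullet> u + 2*t*(u \<bullet> y) + t^2 * (y \<bullet> y)"
        by (simp add: inner_add_left inner_add_right inner_commute power2_eq_square algebra_simps)
      also have "\<dots> = 1 + t^2 * (norm y)^2"
        using that(2) h1 h2 by (simp only: inner_commute[of u y])
      finally show ?thesis .
    qed
    moreover have "q (u + t *\<^sub>R y) = l + 2*t*(y \<bullet> (A *v u)) + t^2 * q y"
      using sym_inner[OF sym, of u y]
      by (simp add: q_def l_def matrix_vector_right_distrib matrix_vector_mult_scaleR inner_add_left inner_add_right inner_commute power2_eq_square algebra_simps)
    ultimately show "2*t*(y \<bullet> (A *v u)) + t^2*(q y - l * (norm y)^2) \<le> 0"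
      by (simp add: algebra_simps)
  qed
  define w where "w = A *v u - l *\<^sub>R u"
  have wS: "w \<in> S" unfolding w_def using inv[OF uS] uS S by (simp add: subspace_diff subspace_scale)
  have "u \<bullet> u = 1" using un by (simp add: dot_square_norm)
  moreover have "(A *v u) \<bullet> u = u \<bullet> (A *v u)" by (rule inner_commute)
  ultimately have wu: "w \<bullet> u = 0" unfolding w_def l_def q_def by (simp add: inner_diff_left)
  have "w \<bullet> (A *v u) = 0" by (rule perp[OF wS wu])
  hence "w \<bullet> w = 0" using wu unfolding w_def by (simp add: inner_diff_right)
  hence "w = 0" by simp
  thus ?thesis using uS un unfolding w_def l_def q_def by auto
qed

lemma spectral:
  fixes A :: "real^'n^'n"
  assumes sym: "transpose A = A" and "subspace S" and "\<forall>x\<in>S. A *v x \<in> S"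
  shows "\<exists>E. finite E \<and> E \<subseteq> S \<and> (\<forall>u\<in>E. norm u = 1 \<and> A *v u = (u \<bullet> (A *v u)) *\<^sub>R u)
     \<and> (\<forall>u\<in>E. \<forall>u'\<in>E. u \<noteq> u' \<longrightarrow> u \<bullet> u' = 0) \<and> (\<forall>x\<in>S. x = (\<Sum>u\<in>E. (u \<bullet> x) *\<^sub>R u))"
  using assms(2,3)
proof (induction "dim S" arbitrary: S rule: less_induct)
  case less
  show ?case
  proof (cases "S = {0}")
    case True
    show ?thesis by (rule exI[of _ "{}"]) (simp add: True)
  next
    case False
    obtain u where uS: "u \<in> S" and un: "norm u = 1" and ue: "A *v u = (u \<bullet> (A *v u)) *\<^sub>R u"
      using eigen_exists[OF sym less.prems(1) False] less.prems(2) by blast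
    define l where "l = u \<bullet> (A *v u)"
    have uu: "u \<bullet> u = 1" using un by (simp add: dot_square_norm)
    define S' where "S' = S \<inter> {x. u \<bullet> x = 0}"
    have sub': "subspace S'" unfolding S'_def
      using subspace_inter[OF less.prems(1) subspace_orthogonal_to_vector[of u]]
      by (simp add: orthogonal_def)
    have inv': "\<forall>x\<in>S'. A *v x \<in> S'"
    proof
      fix x assume x: "x \<in> S'"
      have "u \<bullet> (A *v x) = (A *v u) \<bullet> x" by (rule sym_inner[OF sym])
      also have "\<dots> = (l *\<^sub>R u) \<bullet> x" using ue l_def by metis
      also have "\<dots> = l * (u \<bullet> x)" by simp
      also have "\<dots> = 0" using x S'_def by simp
      finally show "A *v x \<in> S'" using x less.prems(2) S'_def by auto
    qed
    have "u \<notin> S'" using uu S'_def by auto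
    hence "S' \<subset> S" using uS unfolding S'_def by blast
    hence "dim S' < dim S"
      using dim_psubset[of S' S] sub' less.prems(1) by (metis span_eq_iff)
    then obtain E' where E': "finite E'" "E' \<subseteq> S'"
      "\<forall>u\<in>E'. norm u = 1 \<and> A *v u = (u \<bullet> (A *v u)) *\<^sub>R u"
      "\<forall>u\<in>E'. \<forall>u'\<in>E'. u \<noteq> u' \<longrightarrow> u \<bullet> u' = 0"
      "\<forall>x\<in>S'. x = (\<Sum>u\<in>E'. (u \<bullet> x) *\<^sub>R u)"
      using less.hyps[OF _ sub' inv'] by blast
    have uE': "u \<notin> E'" using \<open>u \<notin> S'\<close> E'(2) by blast
    have orth: "e \<bullet> u = 0" "u \<bullet> e = 0" if "e \<in> E'" for e
      using that E'(2) S'_def by (auto simp: inner_commute)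
    show ?thesis
    proof (rule exI[of _ "insert u E'"], intro conjI)
      show "finite (insert u E')" using E'(1) by simp
      show "insert u E' \<subseteq> S" using uS E'(2) S'_def by auto
      show "\<forall>v\<in>insert u E'. norm v = 1 \<and> A *v v = (v \<bullet> (A *v v)) *\<^sub>R v"
        using un ue E'(3) by auto
      show "\<forall>v\<in>insert u E'. \<forall>v'\<in>insert u E'. v \<noteq> v' \<longrightarrow> v \<bullet> v' = 0"
        using E'(4) orth by auto
      show "\<forall>x\<in>S. x = (\<Sum>v\<in>insert u E'. (v \<bullet> x) *\<^sub>R v)"
      proof
        fix x assume x: "x \<in> S"
        define x' where "x' = x - (u \<bullet> x) *\<^sub>R u"
        have "x' \<in> S" unfolding x'_def using x uS less.prems(1)
          by (simp add: subspace_diff subspace_scale)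
        moreover have "u \<bullet> x' = 0" unfolding x'_def using uu by (simp add: inner_diff_right)
        ultimately have "x' \<in> S'" using S'_def by simp
        hence "x' = (\<Sum>e\<in>E'. (e \<bullet> x') *\<^sub>R e)" using E'(5) by blast
        also have "\<dots> = (\<Sum>e\<in>E'. (e \<bullet> x) *\<^sub>R e)"
          by (rule sum.cong) (simp_all add: x'_def inner_diff_right orth)
        finally have "x = (u \<bullet> x) *\<^sub>R u + (\<Sum>e\<in>E'. (e \<bullet> x) *\<^sub>R e)"
          unfolding x'_def by (simp add: algebra_simps)
        thus "x = (\<Sum>v\<in>insert u E'. (v \<bullet> x) *\<^sub>R v)"
          using E'(1) uE' by simp
      qed
    qed
  qed
qed

lemma sym_of_inner:
  fixes D :: "real^'n^'n"
  assumes "\<And>x y. x \<bullet> (D *v y) = (D *v x) \<bullet> y"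
  shows "transpose D = D"
proof -
  have "transpose D *v x = D *v x" for x
  proof -
    have "(transpose D *v x - D *v x) \<bullet> y = 0" for y
      using assms[of x y] dot_lmul_matrix[of x D y]
      by (simp add: inner_diff_left)
    from this[of "transpose D *v x - D *v x"] show ?thesis by simp
  qed
  thus ?thesis by (simp add: matrix_eq)
qed

lemma psd_zero:
  fixes B :: "real^'n^'n"
  assumes sym: "transpose B = B" and psd: "\<forall>x. 0 \<le> x \<bullet> (B *v x)" and y: "y \<bullet> (B *v y) = 0"
  shows "B *v y = 0"
proof -
  have "z \<bullet> (B *v y) = 0" for z
  proof -
    have "- (z \<bullet> (B *v y)) = 0"
    proof (rule quad0[where b = "- (z \<bullet> (B *v z))"])
      fix t :: real
      have "0 \<le> (y + t *\<^sub>R z) \<bullet> (B *v (y + t *\<^sub>R z))" using psd by blast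
      also have "\<dots> = y \<bullet> (B *v y) + t * (z \<bullet> (B *v y)) + t * (y \<bullet> (B *v z)) + t^2 * (z \<bullet> (B *v z))"
        by (simp add: matrix_vector_right_distrib matrix_vector_mult_scaleR inner_add_left inner_add_right power2_eq_square algebra_simps)
      also have "y \<bullet> (B *v z) = z \<bullet> (B *v y)"
        using sym_inner[OF sym, of y z] by (simp add: inner_commute)
      finally show "2 * t * - (z \<bullet> (B *v y)) + t\<^sup>2 * - (z \<bullet> (B *v z)) \<le> 0" using y by simp
    qed
    thus ?thesis by simp
  qed
  from this[of "B *v y"] show ?thesis by simp
qed

lemma orthonormal_coeff:
  fixes E :: "(real^'n) set"
  assumes "finite E" "u \<in> E" "\<forall>u\<in>E. norm u = 1" "\<forall>u\<in>E. \<forall>u'\<in>E. u \<noteq> u' \<longrightarrow> u \<bullet> u' = 0"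
  shows "u \<bullet> (\<Sum>u'\<in>E. c u' *\<^sub>R u') = c u"
proof -
  have "u \<bullet> (\<Sum>u'\<in>E. c u' *\<^sub>R u') = (\<Sum>u'\<in>E. c u' * (u \<bullet> u'))"
    by (simp add: inner_sum_right)
  also have "\<dots> = c u * (u \<bullet> u) + (\<Sum>u'\<in>E - {u}. c u' * (u \<bullet> u'))"
    using assms(1,2) by (simp add: sum.remove)
  also have "(\<Sum>u'\<in>E - {u}. c u' * (u \<bullet> u')) = 0"
    using assms(2,4) by (intro sum.neutral) auto
  also have "u \<bullet> u = 1" using assms(2,3) by (simp add: dot_square_norm)
  finally show ?thesis by simp
qed

lemma sqrt_unique_exists:
  fixes A :: "real^'n^'n"
  assumes sym: "transpose A = A" and psd: "\<forall>x. 0 \<le> x \<bullet> (A *v x)"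
  shows "\<exists>!B. transpose B = B \<and> (\<forall>x. 0 \<le> x \<bullet> (B *v x)) \<and> B ** B = A"
proof -
  obtain E where E: "finite E" "\<forall>u\<in>E. norm u = 1 \<and> A *v u = (u \<bullet> (A *v u)) *\<^sub>R u"
      "\<forall>u\<in>E. \<forall>u'\<in>E. u \<noteq> u' \<longrightarrow> u \<bullet> u' = 0" "\<forall>x. x = (\<Sum>u\<in>E. (u \<bullet> x) *\<^sub>R u)"
    using spectral[OF sym subspace_UNIV] by auto
  have En: "\<forall>u\<in>E. norm u = 1" using E(2) by auto
  define s where "s u = sqrt (u \<bullet> (A *v u))" for u
  define f where "f x = (\<Sum>u\<in>E. (s u * (u \<bullet> x)) *\<^sub>R u)" for x
  have lf: "linear f" unfolding f_def
    by (auto intro!: linearI simp: inner_add_right algebra_simps sum.distrib scaleR_sum_right)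
  define B where "B = matrix f"
  have Bx: "B *v x = f x" for x
    unfolding B_def using matrix_vector_mul(2)[OF lf] by metis
  have coef: "u \<bullet> f x = s u * (u \<bullet> x)" if "u \<in> E" for u x
    unfolding f_def using orthonormal_coeff[OF E(1) that En E(3)] by simp
  have ss: "s u * s u = u \<bullet> (A *v u)" for u
    unfolding s_def using psd by simp
  have symB: "transpose B = B"
  proof (rule sym_of_inner)
    fix x y
    have "x \<bullet> (B *v y) = (\<Sum>u\<in>E. s u * (u \<bullet> y) * (x \<bullet> u))"
      by (simp add: Bx f_def inner_sum_right)
    also have "\<dots> = (\<Sum>u\<in>E. s u * (u \<bullet> x) * (u \<bullet> y))"
      by (simp add: inner_commute algebra_simps)
    also have "\<dots> = (B *v x) \<bullet> y"
      by (simp add: Bx f_def inner_sum_left algebra_simps)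
    finally show "x \<bullet> (B *v y) = (B *v x) \<bullet> y" .
  qed
  have psdB: "\<forall>x. 0 \<le> x \<bullet> (B *v x)"
  proof
    fix x
    have "x \<bullet> (B *v x) = (\<Sum>u\<in>E. s u * (u \<bullet> x)^2)"
      by (simp add: Bx f_def inner_sum_right inner_commute power2_eq_square algebra_simps)
    also have "\<dots> \<ge> 0" by (intro sum_nonneg) (simp add: s_def psd)
    finally show "0 \<le> x \<bullet> (B *v x)" .
  qed
  have BB: "B ** B = A"
  proof -
    have "(B ** B) *v x = A *v x" for x
    proof -
      have "(B ** B) *v x = f (f x)" by (simp add: matrix_vector_mul_assoc[symmetric] Bx)
      also have "\<dots> = (\<Sum>u\<in>E. ((u \<bullet> (A *v u)) * (u \<bullet> x)) *\<^sub>R u)"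
        unfolding f_def[of "f x"] by (intro sum.cong refl) (simp add: coef ss mult.assoc[symmetric])
      also have "\<dots> = (\<Sum>u\<in>E. (u \<bullet> x) *\<^sub>R (A *v u))"
        using E(2) by (intro sum.cong refl) (metis scaleR_scaleR mult.commute)
      also have "\<dots> = A *v (\<Sum>u\<in>E. (u \<bullet> x) *\<^sub>R u)"
        by (simp add: linear_sum[OF matrix_vector_mul_linear] matrix_vector_mult_scaleR)
      also have "\<dots> = A *v x" using E(4) by metis
      finally show ?thesis .
    qed
    thus ?thesis by (simp add: matrix_eq)
  qed
  show ?thesis
  proof (rule ex1I[of _ B])
    show "transpose B = B \<and> (\<forall>x. 0 \<le> x \<bullet> (B *v x)) \<and> B ** B = A" using symB psdB BB by blast
  next
    fix C assume C: "transpose C = C \<and> (\<forall>x. 0 \<le> x \<bullet> (C *v x)) \<and> C ** C = A"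
    have BC: "B *v (B *v x) = C *v (C *v x)" for x
      using BB C by (simp add: matrix_vector_mul_assoc)
    define D where "D = C - B"
    have symD: "transpose D = D"
      by (rule sym_of_inner) (simp add: D_def matrix_vector_mult_diff_rdistrib inner_diff_left inner_diff_right sym_inner[OF symB] sym_inner[of C] C)
    obtain F where F: "finite F" "\<forall>u\<in>F. norm u = 1 \<and> D *v u = (u \<bullet> (D *v u)) *\<^sub>R u"
      "\<forall>x. x = (\<Sum>u\<in>F. (u \<bullet> x) *\<^sub>R u)"
      using spectral[OF symD subspace_UNIV] by auto
    have zero: "D *v u = 0" if "u \<in> F" for u
    proof -
      define m where "m = u \<bullet> (D *v u)"
      have Du: "D *v u = m *\<^sub>R u" using F(2) that m_def by auto
      have Du': "C *v u - B *v u = m *\<^sub>R u" using Du by (simp add: D_def matrix_vector_mult_diff_rdistrib)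
      have "u \<bullet> (C *v (D *v u)) + u \<bullet> (D *v (B *v u)) = u \<bullet> (C *v (C *v u)) - u \<bullet> (B *v (B *v u))"
        by (simp add: D_def matrix_vector_mult_diff_rdistrib matrix_vector_mult_diff_distrib inner_diff_right)
      hence "u \<bullet> (C *v (D *v u)) + u \<bullet> (D *v (B *v u)) = 0" using BC by simp
      moreover have "u \<bullet> (C *v (D *v u)) = m * (u \<bullet> (C *v u))" using Du by (simp add: matrix_vector_mult_scaleR)
      moreover have "u \<bullet> (D *v (B *v u)) = m * (u \<bullet> (B *v u))"
        using sym_inner[OF symD, of u "B *v u"] Du by simp
      ultimately have "m * (u \<bullet> (C *v u) + u \<bullet> (B *v u)) = 0" by (simp add: algebra_simps)
      moreover have "0 \<le> u \<bullet> (C *v u)" "0 \<le> u \<bullet> (B *v u)" using C psdB by auto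
      ultimately have "m = 0 \<or> (u \<bullet> (C *v u) = 0 \<and> u \<bullet> (B *v u) = 0)" by auto
      thus ?thesis
      proof
        assume "m = 0" thus ?thesis using Du by simp
      next
        assume h: "u \<bullet> (C *v u) = 0 \<and> u \<bullet> (B *v u) = 0"
        have "C *v u = 0" using psd_zero[of C u] C h by blast
        moreover have "B *v u = 0" using psd_zero[OF symB psdB] h by blast
        ultimately show ?thesis by (simp add: D_def matrix_vector_mult_diff_rdistrib)
      qed
    qed
    have "D *v x = 0" for x
    proof -
      have "D *v x = D *v (\<Sum>u\<in>F. (u \<bullet> x) *\<^sub>R u)" using F(3) by metis
      also have "\<dots> = (\<Sum>u\<in>F. (u \<bullet> x) *\<^sub>R (D *v u))"
        by (simp add: linear_sum[OF matrix_vector_mul_linear] matrix_vector_mult_scaleR)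
      also have "\<dots> = 0" using zero by simp
      finally show ?thesis .
    qed
    hence "D = 0" by (simp add: matrix_eq)
    thus "C = B" by (simp add: D_def)
  qed
qed

lemma opnorm_msqrt_pos:
  fixes A :: "real^'n^'n"
  assumes sym: "transpose A = A" and pd: "\<forall>y. y \<noteq> 0 \<longrightarrow> 0 < y \<bullet> (A *v y)"
  shows "0 < opnorm (msqrt A)"
proof -
  have psd: "\<forall>x. 0 \<le> x \<bullet> (A *v x)"
    using pd by (metis inner_zero_left less_eq_real_def)
  have "transpose (msqrt A) = msqrt A \<and> (\<forall>x. 0 \<le> x \<bullet> (msqrt A *v x)) \<and> msqrt A ** msqrt A = A"
    unfolding msqrt_def by (rule theI'[OF sqrt_unique_exists[OF sym psd]])
  hence BB: "msqrt A ** msqrt A = A" by blast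
  define y :: "real^'n" where "y = axis undefined 1"
  have "y \<noteq> 0" unfolding y_def by (simp add: axis_eq_0_iff)
  hence "0 < y \<bullet> (A *v y)" using pd by blast
  hence "A \<noteq> 0" by auto
  hence "msqrt A \<noteq> 0" using BB by auto
  hence "\<not> (\<forall>x. msqrt A *v x = 0)" by (simp add: matrix_eq)
  thus ?thesis unfolding opnorm_def
    using onorm_pos_lt[OF matrix_vector_mul_bounded_linear[of "msqrt A"]] by simp
qed



lemma pw_main:
  fixes F w c a r s :: real
  assumes F: "0 \<le> F" and w: "0 < w" and c: "0 < c" and a: "0 < a" and r: "0 < r" and s: "s = r + a"
  shows "a * (F powr r / w powr r * ln (F / w)) \<le> F powr s / (w powr s * c) - (1 - ln c) * (F powr r / w powr r)"
proof (cases "F = 0")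
  case True thus ?thesis by simp
next
  case False
  define t where "t = F / w"
  have t: "0 < t" using F False w by (simp add: t_def)
  have e1: "F powr r / w powr r = t powr r" using F w by (simp add: t_def powr_divide)
  have e2: "F powr s / (w powr s * c) = t powr r * (t powr a / c)"
    using F w by (simp add: t_def powr_divide s powr_add field_simps)
  have "ln (t powr a / c) \<le> t powr a / c - 1" by (rule ln_le_minus_one) (use t c in simp)
  hence "a * ln t \<le> t powr a / c - 1 + ln c" using t c by (simp add: ln_div ln_powr)
  hence "t powr r * (a * ln t) \<le> t powr r * (t powr a / c - 1 + ln c)"
    by (rule mult_left_mono) simp
  thus ?thesis unfolding e1 e2 by (simp add: t_def[symmetric] algebra_simps)
qed

lemma pw_bound:
  fixes F w a r s :: real
  assumes F: "0 \<le> F" and w: "0 < w" and a: "0 < a" and r: "1 \<le> r" and s: "s = r + a"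
  shows "\<bar>F powr r / w powr r * ln (F / w)\<bar> \<le> 1 + F powr s / (a * w powr s)"
proof (cases "F = 0")
  case True thus ?thesis using w a by simp
next
  case False
  define t where "t = F / w"
  have t: "0 < t" using F False w by (simp add: t_def)
  have e1: "F powr r / w powr r = t powr r" using F w by (simp add: t_def powr_divide)
  have e2: "F powr s / (a * w powr s) = t powr r * t powr a / a"
    using F w by (simp add: t_def powr_divide s powr_add field_simps)
  have pos: "0 \<le> F powr s / (a * w powr s)" using a by simp
  show ?thesis
  proof (cases "t \<le> 1")
    case True
    have "ln (1/t) \<le> 1/t - 1" by (rule ln_le_minus_one) (use t in simp)
    hence l: "- ln t \<le> 1/t" using t by (simp add: ln_div)
    have lt: "ln t \<le> 0" using t True by simp
    have "t powr r \<le> t powr 1" using powr_mono'[OF r, of t] True t by simp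
    hence "t powr r \<le> t" using t by simp
    have "\<bar>t powr r * ln t\<bar> = t powr r * (- ln t)" proof -
      have "t powr r * ln t \<le> 0" using lt t by (simp add: mult_nonneg_nonpos)
      thus ?thesis by simp
    qed
    also have "\<dots> \<le> t powr r * (1/t)" by (rule mult_left_mono[OF l]) simp
    also have "\<dots> \<le> 1" using \<open>t powr r \<le> t\<close> t by (simp add: divide_le_eq)
    finally show ?thesis unfolding e1 t_def[symmetric] using pos by linarith
  next
    case False
    have lt: "0 \<le> ln t" using False by simp
    have "ln (t powr a) \<le> t powr a - 1" by (rule ln_le_minus_one) (use t in simp)
    hence "a * ln t \<le> t powr a" using t by (simp add: ln_powr)
    hence "ln t \<le> t powr a / a" using a by (simp add: field_simps)
    hence "t powr r * ln t \<le> t powr r * (t powr a / a)" by (rule mult_left_mono) simp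
    moreover have "0 \<le> t powr r * ln t" using lt by simp
    ultimately show ?thesis unfolding e1 e2 t_def[symmetric] by simp
  qed
qed



lemma nn_set_int:
  fixes h :: "'a \<Rightarrow> real"
  assumes hm: "h \<in> borel_measurable M" and h0: "\<And>x. 0 \<le> h x" and A: "A \<in> sets M"
    and fin: "(\<integral>\<^sup>+x\<in>A. ennreal (h x) \<partial>M) < \<infinity>"
  shows "set_integrable M A h" "(LINT x:A|M. h x) = enn2real (\<integral>\<^sup>+x\<in>A. ennreal (h x) \<partial>M)"
proof -
  have eq: "(\<integral>\<^sup>+x\<in>A. ennreal (h x) \<partial>M) = (\<integral>\<^sup>+x. ennreal (norm (indicator A x *\<^sub>R h x)) \<partial>M)"
    by (rule nn_integral_cong) (simp add: h0 split: split_indicator)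
  have m: "(\<lambda>x. indicator A x *\<^sub>R h x) \<in> borel_measurable M" using hm A by measurable
  show si: "set_integrable M A h" unfolding set_integrable_def
    by (rule integrableI_bounded[OF m]) (use fin eq in simp)
  have "(\<integral>\<^sup>+x\<in>A. ennreal (h x) \<partial>M) = (\<integral>\<^sup>+x. ennreal (indicator A x *\<^sub>R h x) \<partial>M)"
    by (rule nn_integral_cong) (simp add: h0 split: split_indicator)
  also have "\<dots> = ennreal (LINT x:A|M. h x)"
    unfolding set_lebesgue_integral_def
    by (rule nn_integral_eq_integral) (use si in \<open>simp_all add: set_integrable_def h0\<close>)
  finally have "(\<integral>\<^sup>+x\<in>A. ennreal (h x) \<partial>M) = ennreal (LINT x:A|M. h x)" .
  moreover have "0 \<le> (LINT x:A|M. h x)"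
    unfolding set_lebesgue_integral_def by (intro Bochner_Integration.integral_nonneg) (simp add: h0)
  ultimately show "(LINT x:A|M. h x) = enn2real (\<integral>\<^sup>+x\<in>A. ennreal (h x) \<partial>M)" by simp
qed



lemma pw_pow:
  fixes F r q :: real
  assumes "0 \<le> F" "0 < r" "r \<le> q"
  shows "F powr r \<le> 1 + F powr q"
proof (cases "F \<le> 1")
  case True
  hence "F powr r \<le> 1" using powr_mono2[of r F 1] assms by simp
  thus ?thesis by (smt (verit) powr_ge_zero)
next
  case False
  hence "F powr r \<le> F powr q" using assms by (intro powr_mono) auto
  thus ?thesis by simp
qed

theorem lemma6p1:
  fixes Q :: "real^'n \<Rightarrow> real^'n^'n" and v :: "real^'n \<Rightarrow> real"
    and \<Omega> :: "(real^'n) set" and p \<sigma> M r \<epsilon> :: real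
    and f :: "real^'n \<Rightarrow> real" and g :: "real^'n \<Rightarrow> real^'n"
  assumes "CARD('n) \<ge> 3"
    and "open \<Omega>" and "connected \<Omega>" and "bounded \<Omega>"
    and "1 < p"
    and "hypH Q v \<Omega> p"
    and "M > 0" and "\<sigma> > 1" and "hypS Q v \<Omega> p \<sigma> M"
    and "H0 Q v \<Omega> p f g"
    and "\<not> (AE x in lebesgue. x \<in> \<Omega> \<longrightarrow> f x = 0)"
    and "1 \<le> r" and "r < \<sigma> * p"
    and "\<epsilon> > 0"
  shows "set_integrable lebesgue \<Omega>
           (\<lambda>x. \<bar>f x\<bar> powr r / wnorm v \<Omega> r f powr r * ln (\<bar>f x\<bar> / wnorm v \<Omega> r f) * v x)
       \<and> (LINT x:\<Omega>|lebesgue. \<bar>f x\<bar> powr r / wnorm v \<Omega> r f powr r * ln (\<bar>f x\<bar> / wnorm v \<Omega> r f) * v x)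
         \<le> \<sigma> / (\<sigma> * p - r) *
            (\<epsilon> * M powr p * Qnorm Q \<Omega> p g powr p / wnorm v \<Omega> r f powr p - ln \<epsilon>)"
proof -
  note H = assms(6)[unfolded hypH_def]
  note HF = assms(10)[unfolded H0_def]
  have Om: "\<Omega> \<in> sets lebesgue" using assms(2) by (metis borel_open sets_completionI_sets sets_lborel)
  have fm[measurable]: "f \<in> borel_measurable lebesgue" using HF by blast
  have vm[measurable]: "v \<in> borel_measurable lebesgue" using H by blast
  have v0: "\<And>x. 0 \<le> v x" using H by blast
  have vint: "set_integrable lebesgue \<Omega> v" using H by blast
  have vpos: "AE x in lebesgue. x \<in> \<Omega> \<longrightarrow> 0 < v x"
  proof -
    have "AE x in lebesgue. x \<in> \<Omega> \<longrightarrow> transpose (Q x) = Q x \<and> (\<forall>y. y \<noteq> 0 \<longrightarrow> 0 < y \<bullet> (Q x *v y))"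
      using H by blast
    moreover have "AE x in lebesgue. x \<in> \<Omega> \<longrightarrow> opnorm (msqrt (Q x)) powr p \<le> v x" using H by blast
    ultimately show ?thesis
    proof eventually_elim
      case (elim x)
      show ?case
      proof
        assume x: "x \<in> \<Omega>"
        hence "0 < opnorm (msqrt (Q x))" using elim opnorm_msqrt_pos by blast
        hence "0 < opnorm (msqrt (Q x)) powr p" by simp
        thus "0 < v x" using elim x by linarith
      qed
    qed
  qed
  define q where "q = \<sigma> * p"
  have q: "r < q" "0 < q" using assms(12,13) q_def by auto
  have S: "(\<integral>\<^sup>+x\<in>\<Omega>. ennreal (\<bar>f x\<bar> powr q * v x) \<partial>lebesgue) < \<infinity>"
    and Sle: "wnorm v \<Omega> q f \<le> M * Qnorm Q \<Omega> p g"
    using assms(9)[unfolded hypS_def] assms(10) q_def by blast+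
  have vfin: "(\<integral>\<^sup>+x\<in>\<Omega>. ennreal (v x) \<partial>lebesgue) < \<infinity>"
  proof -
    have "(\<integral>\<^sup>+x\<in>\<Omega>. ennreal (v x) \<partial>lebesgue) = (\<integral>\<^sup>+x. ennreal (norm (indicator \<Omega> x *\<^sub>R v x)) \<partial>lebesgue)"
      by (rule nn_integral_cong) (simp add: v0 split: split_indicator)
    also have "\<dots> < \<infinity>" using vint unfolding set_integrable_def by (simp add: integrable_iff_bounded)
    finally show ?thesis .
  qed
  have rfin: "(\<integral>\<^sup>+x\<in>\<Omega>. ennreal (\<bar>f x\<bar> powr r * v x) \<partial>lebesgue) < \<infinity>"
  proof -
    have "(\<integral>\<^sup>+x\<in>\<Omega>. ennreal (\<bar>f x\<bar> powr r * v x) \<partial>lebesgue)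
        \<le> (\<integral>\<^sup>+x\<in>\<Omega>. (ennreal (v x) + ennreal (\<bar>f x\<bar> powr q * v x)) \<partial>lebesgue)"
    proof (rule nn_set_integral_mono)
      show "AE x\<in>\<Omega> in lebesgue. ennreal (\<bar>f x\<bar> powr r * v x) \<le> ennreal (v x) + ennreal (\<bar>f x\<bar> powr q * v x)"
      proof (rule AE_I2, rule impI)
        fix x
        have "\<bar>f x\<bar> powr r * v x \<le> (1 + \<bar>f x\<bar> powr q) * v x"
          using pw_pow[of "\<bar>f x\<bar>" r q] q assms(12) v0[of x] by (intro mult_right_mono) auto
        thus "ennreal (\<bar>f x\<bar> powr r * v x) \<le> ennreal (v x) + ennreal (\<bar>f x\<bar> powr q * v x)"
          using v0[of x] by (simp add: ennreal_plus[symmetric] distrib_right del: ennreal_plus)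
      qed
    qed (use Om in auto)
    also have "\<dots> = (\<integral>\<^sup>+x\<in>\<Omega>. ennreal (v x) \<partial>lebesgue) + (\<integral>\<^sup>+x\<in>\<Omega>. ennreal (\<bar>f x\<bar> powr q * v x) \<partial>lebesgue)"
      by (rule nn_set_integral_add) (use Om in auto)
    also have "\<dots> < \<infinity>" using vfin S by simp
    finally show ?thesis .
  qed
  have pos: "0 < enn2real (\<integral>\<^sup>+x\<in>\<Omega>. ennreal (\<bar>f x\<bar> powr s * v x) \<partial>lebesgue)"
    if s: "0 < s" and fin: "(\<integral>\<^sup>+x\<in>\<Omega>. ennreal (\<bar>f x\<bar> powr s * v x) \<partial>lebesgue) < \<infinity>" for s
  proof -
    have "(\<integral>\<^sup>+x\<in>\<Omega>. ennreal (\<bar>f x\<bar> powr s * v x) \<partial>lebesgue) \<noteq> 0"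
    proof
      assume "(\<integral>\<^sup>+x\<in>\<Omega>. ennreal (\<bar>f x\<bar> powr s * v x) \<partial>lebesgue) = 0"
      hence "AE x in lebesgue. ennreal (\<bar>f x\<bar> powr s * v x) * indicator \<Omega> x = 0"
        by (subst nn_integral_0_iff_AE[symmetric]) (use Om in auto)
      hence "AE x in lebesgue. x \<in> \<Omega> \<longrightarrow> f x = 0" using vpos
      proof eventually_elim
        case (elim x)
        show ?case
        proof
          assume x: "x \<in> \<Omega>"
          hence "\<bar>f x\<bar> powr s * v x \<le> 0" using elim by simp
          hence "\<bar>f x\<bar> powr s \<le> 0" using elim x by (simp add: mult_le_0_iff)
          thus "f x = 0" by simp
        qed
      qed
      with assms(11) show False by blast
    qed
    thus ?thesis using fin by (simp add: enn2real_positive_iff zero_less_iff_neq_zero)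
  qed
  define Wr where "Wr = enn2real (\<integral>\<^sup>+x\<in>\<Omega>. ennreal (\<bar>f x\<bar> powr r * v x) \<partial>lebesgue)"
  define Wq where "Wq = enn2real (\<integral>\<^sup>+x\<in>\<Omega>. ennreal (\<bar>f x\<bar> powr q * v x) \<partial>lebesgue)"
  have Wr: "0 < Wr" unfolding Wr_def using pos[OF _ rfin] assms(12) by simp
  have Wq: "0 < Wq" unfolding Wq_def using pos[OF _ S] q by simp
  define w where "w = wnorm v \<Omega> r f"
  define S0 where "S0 = wnorm v \<Omega> q f"
  define G where "G = Qnorm Q \<Omega> p g"
  have w_eq: "w = Wr powr (1/r)" unfolding w_def Wr_def wnorm_def by simp
  have S0_eq: "S0 = Wq powr (1/q)" unfolding S0_def Wq_def wnorm_def by simp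
  have w: "0 < w" using w_eq Wr by simp
  have S0: "0 < S0" using S0_eq Wq by simp
  have wr: "w powr r = Wr" using w_eq Wr assms(12) by (simp add: powr_powr)
  have S0q: "S0 powr q = Wq" using S0_eq Wq q by (simp add: powr_powr)
  have G: "0 < G" using Sle S0 assms(7) unfolding S0_def G_def
    by (smt (verit, best) mult_nonneg_nonpos)
  have ir: "set_integrable lebesgue \<Omega> (\<lambda>x. \<bar>f x\<bar> powr r * v x)"
       "(LINT x:\<Omega>|lebesgue. \<bar>f x\<bar> powr r * v x) = Wr"
    using nn_set_int[of "\<lambda>x. \<bar>f x\<bar> powr r * v x" lebesgue \<Omega>] rfin Om v0 unfolding Wr_def by auto
  have iq: "set_integrable lebesgue \<Omega> (\<lambda>x. \<bar>f x\<bar> powr q * v x)"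
       "(LINT x:\<Omega>|lebesgue. \<bar>f x\<bar> powr q * v x) = Wq"
    using nn_set_int[of "\<lambda>x. \<bar>f x\<bar> powr q * v x" lebesgue \<Omega>] S Om v0 unfolding Wq_def by auto
  define a where "a = q - r"
  have a: "0 < a" using q a_def by simp
  define h where "h x = \<bar>f x\<bar> powr r / w powr r * ln (\<bar>f x\<bar> / w) * v x" for x
  have hm: "h \<in> borel_measurable lebesgue" unfolding h_def by measurable
  define bd where "bd x = v x + 1 / (a * w powr q) * (\<bar>f x\<bar> powr q * v x)" for x
  have bdi: "set_integrable lebesgue \<Omega> bd" unfolding bd_def
    using vint iq(1) by (intro set_integral_add(1) set_integrable_mult_right) auto
  have hi: "set_integrable lebesgue \<Omega> h"
  proof (rule set_integrable_bound[OF bdi])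
    show "set_borel_measurable lebesgue \<Omega> h" unfolding set_borel_measurable_def using hm Om by measurable
    show "AE x in lebesgue. x \<in> \<Omega> \<longrightarrow> norm (h x) \<le> norm (bd x)"
    proof (rule AE_I2, rule impI)
      fix x
      have "\<bar>\<bar>f x\<bar> powr r / w powr r * ln (\<bar>f x\<bar> / w)\<bar> \<le> 1 + \<bar>f x\<bar> powr q / (a * w powr q)"
        by (rule pw_bound) (use w a assms(12) a_def in auto)
      hence "\<bar>\<bar>f x\<bar> powr r / w powr r * ln (\<bar>f x\<bar> / w)\<bar> * v x \<le> (1 + \<bar>f x\<bar> powr q / (a * w powr q)) * v x"
        using v0[of x] by (rule mult_right_mono)
      moreover have "0 \<le> bd x" unfolding bd_def using v0[of x] a w by simp
      ultimately show "norm (h x) \<le> norm (bd x)"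
        unfolding h_def bd_def using v0[of x] by (simp add: abs_mult algebra_simps)
    qed
  qed
  define c where "c = Wq / w powr q"
  have c: "0 < c" using Wq w c_def by simp
  define R where "R x = 1 / (w powr q * c) * (\<bar>f x\<bar> powr q * v x) - (1 - ln c) / w powr r * (\<bar>f x\<bar> powr r * v x)" for x
  have Ri: "set_integrable lebesgue \<Omega> R" unfolding R_def
    using ir(1) iq(1) by (intro set_integral_diff(1) set_integrable_mult_right) auto
  have "(LINT x:\<Omega>|lebesgue. R x) = 1 / (w powr q * c) * Wq - (1 - ln c) / w powr r * Wr"
    unfolding R_def using ir iq by (simp add: set_integral_diff(2))
  also have "\<dots> = ln c" using c Wq Wr wr w unfolding c_def by (simp add: field_simps)
  finally have RI: "(LINT x:\<Omega>|lebesgue. R x) = ln c" .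
  have "a * (LINT x:\<Omega>|lebesgue. h x) = (LINT x:\<Omega>|lebesgue. a * h x)" by simp
  also have "\<dots> \<le> (LINT x:\<Omega>|lebesgue. R x)"
  proof (rule set_integral_mono)
    show "set_integrable lebesgue \<Omega> (\<lambda>x. a * h x)" using hi by auto
    show "set_integrable lebesgue \<Omega> R" by (rule Ri)
    fix x
    have "a * (\<bar>f x\<bar> powr r / w powr r * ln (\<bar>f x\<bar> / w))
       \<le> \<bar>f x\<bar> powr q / (w powr q * c) - (1 - ln c) * (\<bar>f x\<bar> powr r / w powr r)"
      by (rule pw_main) (use w c a a_def assms(12) in auto)
    hence "a * (\<bar>f x\<bar> powr r / w powr r * ln (\<bar>f x\<bar> / w)) * v x
       \<le> (\<bar>f x\<bar> powr q / (w powr q * c) - (1 - ln c) * (\<bar>f x\<bar> powr r / w powr r)) * v x"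
      using v0[of x] by (rule mult_right_mono)
    thus "a * h x \<le> R x" unfolding h_def R_def by (simp add: algebra_simps)
  qed
  finally have main: "a * (LINT x:\<Omega>|lebesgue. h x) \<le> ln c" using RI by simp
  have "ln c = q * (ln S0 - ln w)"
    using Wq w S0 unfolding c_def S0q[symmetric] by (simp add: ln_div ln_powr algebra_simps)
  also have "\<dots> \<le> q * (ln M + ln G - ln w)"
  proof -
    have "ln S0 \<le> ln (M * G)" using Sle S0 unfolding S0_def G_def by simp
    thus ?thesis using q assms(7) G by (simp add: ln_mult)
  qed
  also have "\<dots> = \<sigma> * ln (M powr p * G powr p / w powr p)"
    using assms(7) G w unfolding q_def by (simp add: ln_div ln_mult ln_powr algebra_simps)
  also have "\<dots> \<le> \<sigma> * (\<epsilon> * (M powr p * G powr p / w powr p) - ln \<epsilon>)"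
  proof -
    define K where "K = M powr p * G powr p / w powr p"
    have K: "0 < K" unfolding K_def using assms(7) G w by simp
    have "ln (\<epsilon> * K) \<le> \<epsilon> * K - 1" by (rule ln_le_minus_one) (use K assms(14) in simp)
    hence "ln K \<le> \<epsilon> * K - ln \<epsilon>" using K assms(14) by (simp add: ln_mult)
    thus ?thesis unfolding K_def[symmetric] using assms(8) by simp
  qed
  finally have fin: "a * (LINT x:\<Omega>|lebesgue. h x) \<le> \<sigma> * (\<epsilon> * (M powr p * G powr p / w powr p) - ln \<epsilon>)"
    using main by linarith
  have "(LINT x:\<Omega>|lebesgue. h x) \<le> \<sigma> / a * (\<epsilon> * (M powr p * G powr p / w powr p) - ln \<epsilon>)"
    using fin a by (simp add: field_simps)
  hence "(LINT x:\<Omega>|lebesgue. h x) \<le> \<sigma> / (\<sigma> * p - r) * (\<epsilon> * M powr p * G powr p / w powr p - ln \<epsilon>)"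
    unfolding a_def q_def by (simp add: mult.assoc)
  thus ?thesis using hi unfolding h_def w_def G_def by blast
qed

end
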